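(* Let $n\ge2$, let $f:2^{[n]}\to\mathbb{R}_+$ be monotone submodular, and let $\mathbf{x}=(x,\dots,x)\in[0,1]^n$ with $x\le 1/(n-1)$ or $x\ge(n-2)/(n-1)$. Then $f^{+}(\mathbf{x})/f^{++}(\mathbf{x})\le4/3$ (with the convention $0/0=1$).
   Context: $[n]=\{1,\dots,n\}$. A set function $f:2^{[n]}\to\mathbb{R}_+$ is monotone if $f(S)\le f(T)$ for $S\subseteq T$, submodular if $f(S)+f(T)\ge f(S\cap T)+f(S\cup T)$. For $\mathbf{x}\in[0,1]^n$: the concave closure $f^{+}(\mathbf{x})=\max\sum_{S\subseteq[n]}\theta(S)f(S)$ over $\theta:2^{[n]}\to\mathbb{R}_{\ge0}$ with $\sum_S\theta(S)=1$ and $\sum_{S\ni i}\theta(S)=x_i$ for all $i$; the upper pairwise independent extension $f^{++}(\mathbf{x})$ is the same maximum with the additional constraints $\sum_{S\ni i,j}\theta(S)=x_ix_j$ for all $i<j$. *)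

theory Defs
  imports Main "HOL-Library.FuncSet" Complex_Main
begin

text \<open>Ground set [n] = {1..n}; set functions are f :: nat set => real, only their
values on subsets of {1..n} matter. Points x in [0,1]^n are functions nat => real,
only the values on {1..n} matter.\<close>

definition monotone_setfun :: "nat \<Rightarrow> (nat set \<Rightarrow> real) \<Rightarrow> bool" where
  "monotone_setfun n f \<longleftrightarrow> (\<forall>S T. S \<subseteq> T \<and> T \<subseteq> {1..n} \<longrightarrow> f S \<le> f T)"

definition submodular_setfun :: "nat \<Rightarrow> (nat set \<Rightarrow> real) \<Rightarrow> bool" where
  "submodular_setfun n f \<longleftrightarrow>
     (\<forall>S T. S \<subseteq> {1..n} \<and> T \<subseteq> {1..n} \<longrightarrow> f S + f T \<ge> f (S \<inter> T) + f (S \<union> T))"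

definition nonneg_setfun :: "nat \<Rightarrow> (nat set \<Rightarrow> real) \<Rightarrow> bool" where
  "nonneg_setfun n f \<longleftrightarrow> (\<forall>S. S \<subseteq> {1..n} \<longrightarrow> f S \<ge> 0)"

definition marginal_dist :: "nat \<Rightarrow> (nat \<Rightarrow> real) \<Rightarrow> (nat set \<Rightarrow> real) \<Rightarrow> bool" where
  "marginal_dist n x \<theta> \<longleftrightarrow>
     (\<forall>S\<in>Pow {1..n}. \<theta> S \<ge> 0) \<and>
     (\<Sum>S\<in>Pow {1..n}. \<theta> S) = 1 \<and>
     (\<forall>i\<in>{1..n}. (\<Sum>S\<in>{S\<in>Pow {1..n}. i \<in> S}. \<theta> S) = x i)"

definition pairwise_indep_dist :: "nat \<Rightarrow> (nat \<Rightarrow> real) \<Rightarrow> (nat set \<Rightarrow> real) \<Rightarrow> bool" where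
  "pairwise_indep_dist n x \<theta> \<longleftrightarrow>
     marginal_dist n x \<theta> \<and>
     (\<forall>i\<in>{1..n}. \<forall>j\<in>{1..n}. i < j \<longrightarrow>
        (\<Sum>S\<in>{S\<in>Pow {1..n}. i \<in> S \<and> j \<in> S}. \<theta> S) = x i * x j)"

text \<open>Concave closure f^+ (the maximum is attained; we take the supremum).\<close>
definition concave_closure :: "nat \<Rightarrow> (nat set \<Rightarrow> real) \<Rightarrow> (nat \<Rightarrow> real) \<Rightarrow> real" where
  "concave_closure n f x =
     Sup {(\<Sum>S\<in>Pow {1..n}. \<theta> S * f S) | \<theta>. marginal_dist n x \<theta>}"

definition upper_pi_ext :: "nat \<Rightarrow> (nat set \<Rightarrow> real) \<Rightarrow> (nat \<Rightarrow> real) \<Rightarrow> real" where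
  "upper_pi_ext n f x =
     Sup {(\<Sum>S\<in>Pow {1..n}. \<theta> S * f S) | \<theta>. pairwise_indep_dist n x \<theta>}"

end

theory Submission
  imports Defs
begin


definition th1 :: "nat set \<Rightarrow> real \<Rightarrow> real \<Rightarrow> real \<Rightarrow> nat set \<Rightarrow> real" where
  "th1 N A B C S = (if S = {} then A else if card S = 1 then B else if S = N then C else 0)"

lemma sum_singletons:
  assumes "finite N"
  shows "(\<Sum>S\<in>Pow N. if card S = 1 then h S else 0) = (\<Sum>i\<in>N. h {i})"
proof -
  have "(\<Sum>S\<in>Pow N. if card S = 1 then h S else 0) = (\<Sum>S\<in>{S\<in>Pow N. card S = 1}. h S)"
    using sum.inter_filter[of "Pow N" h "\<lambda>S. card S = 1"] assms by simp
  also have "{S\<in>Pow N. card S = 1} = (\<lambda>i. {i}) ` N"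
    by (auto simp: card_1_singleton_iff)
  also have "(\<Sum>S\<in>(\<lambda>i. {i}) ` N. h S) = (\<Sum>i\<in>N. h {i})"
    by (subst sum.reindex) (auto simp: inj_on_def)
  finally show ?thesis .
qed

lemma th1_sum:
  assumes "finite N" "2 \<le> card N"
  shows "(\<Sum>S\<in>Pow N. th1 N A B C S * g S) = A * g {} + B * (\<Sum>i\<in>N. g {i}) + C * g N"
proof -
  have "\<And>S. S \<in> Pow N \<Longrightarrow> th1 N A B C S * g S =
     (if S = {} then A * g S else 0) + (if card S = 1 then B * g S else 0) + (if S = N then C * g S else 0)"
    using assms by (auto simp: th1_def)
  hence "(\<Sum>S\<in>Pow N. th1 N A B C S * g S) = (\<Sum>S\<in>Pow N. (if S = {} then A * g S else 0) + (if card S = 1 then B * g S else 0) + (if S = N then C * g S else 0))"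
    by (rule sum.cong[OF refl])
  also have "\<dots> = A * g {} + B * (\<Sum>i\<in>N. g {i}) + C * g N"
    using assms sum_singletons[OF assms(1), of "\<lambda>S. B * g S"] by (simp add: sum.distrib sum_distrib_left)
  finally show ?thesis .
qed

lemma sum_compl:
  assumes "finite N"
  shows "(\<Sum>S\<in>Pow N. h S) = (\<Sum>T\<in>Pow N. h (N - T))"
  by (rule sum.reindex_bij_witness[where i="\<lambda>T. N - T" and j="\<lambda>T. N - T"]) (auto simp: Diff_Diff_Int Int_absorb1)

lemma th2_sum:
  assumes "finite N" "2 \<le> card N"
  shows "(\<Sum>S\<in>Pow N. th1 N A B C (N - S) * g S) = A * g N + B * (\<Sum>i\<in>N. g (N - {i})) + C * g {}"
proof -
  have "(\<Sum>S\<in>Pow N. th1 N A B C (N - S) * g S) = (\<Sum>T\<in>Pow N. th1 N A B C (N - (N - T)) * g (N - T))"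
    by (rule sum_compl[OF assms(1), of "\<lambda>S. th1 N A B C (N - S) * g S"])
  also have "\<dots> = (\<Sum>T\<in>Pow N. th1 N A B C T * g (N - T))"
    by (rule sum.cong) (auto simp: Diff_Diff_Int Int_absorb1)
  also have "\<dots> = A * g N + B * (\<Sum>i\<in>N. g (N - {i})) + C * g {}"
    using th1_sum[OF assms, of A B C "\<lambda>T. g (N - T)"] by simp
  finally show ?thesis .
qed

lemma sum_filter_ind:
  assumes "finite A"
  fixes \<theta> :: "'a \<Rightarrow> real"
  shows "(\<Sum>S\<in>{S\<in>A. P S}. \<theta> S) = (\<Sum>S\<in>A. \<theta> S * (if P S then 1 else 0))"
  using assms by (auto simp: sum.inter_filter intro!: sum.cong)

lemma swap_marg:
  assumes "marginal_dist n (\<lambda>_. x) \<theta>"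
  shows "(\<Sum>S\<in>Pow {1..n}. \<theta> S * (\<Sum>i\<in>S. c i)) = x * (\<Sum>i\<in>{1..n}. c i)"
proof -
  let ?N = "{1..n::nat}"
  have "(\<Sum>S\<in>Pow ?N. \<theta> S * (\<Sum>i\<in>S. c i)) = (\<Sum>S\<in>Pow ?N. \<Sum>i\<in>?N. c i * (\<theta> S * (if i \<in> S then 1 else 0)))"
  proof (rule sum.cong[OF refl])
    fix S assume "S \<in> Pow ?N"
    hence "{i\<in>?N. i\<in>S} = S" by auto
    hence "(\<Sum>i\<in>S. c i) = (\<Sum>i\<in>?N. if i \<in> S then c i else 0)"
      using sum.inter_filter[of ?N c "\<lambda>i. i\<in>S"] by simp
    thus "\<theta> S * (\<Sum>i\<in>S. c i) = (\<Sum>i\<in>?N. c i * (\<theta> S * (if i \<in> S then 1 else 0)))"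
      by (simp add: sum_distrib_left if_distrib mult.commute cong: if_cong)
  qed
  also have "\<dots> = (\<Sum>i\<in>?N. c i * (\<Sum>S\<in>Pow ?N. \<theta> S * (if i \<in> S then 1 else 0)))"
    by (subst sum.swap) (simp add: sum_distrib_left)
  also have "\<dots> = (\<Sum>i\<in>?N. c i * x)"
  proof (rule sum.cong[OF refl])
    fix i assume i: "i \<in> ?N"
    have "(\<Sum>S\<in>{S\<in>Pow ?N. i\<in>S}. \<theta> S) = x" using assms i unfolding marginal_dist_def by blast
    thus "c i * (\<Sum>S\<in>Pow ?N. \<theta> S * (if i \<in> S then 1 else 0)) = c i * x"
      using sum_filter_ind[where A="Pow ?N" and P="\<lambda>S. i\<in>S" and \<theta>=\<theta>] by simp
  qed
  finally show ?thesis by (simp add: sum_distrib_left mult.commute)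
qed




lemma lin2: "(p2::real) \<le> p \<Longrightarrow> 3/4*D \<le> t \<Longrightarrow> p2 + q = t \<Longrightarrow> v \<le> a + D \<Longrightarrow> 0 \<le> a \<Longrightarrow> 3*v \<le> 4*(a + p + q)"
  unfolding distrib_left by linarith

lemma lin1: "0 \<le> (a::real) \<Longrightarrow> (q2::real) \<le> q \<Longrightarrow> 3/4*r \<le> t \<Longrightarrow> p + q2 = t \<Longrightarrow> v \<le> a + r \<Longrightarrow> 3*v \<le> 4*(a + p + q)"
  unfolding distrib_left by linarith

lemma arith_small:
  fixes a M Bs x v :: real
  assumes "0 \<le> a" "a \<le> M" "0 \<le> Bs" "0 \<le> x" "x \<le> 1" "v \<le> M" "v \<le> a + x * Bs"
  shows "3 * v \<le> 4 * (a + x*(1-x)*Bs + x^2*(M-a))"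
proof -
  have q: "1 - x + x^2 \<ge> 3/4" using zero_le_power2[of "x - 1/2"] by (simp add: power2_eq_square algebra_simps)
  show ?thesis
  proof (cases "x * Bs \<le> M - a")
    case True
    have "x^2*(x*Bs) \<le> x^2*(M-a)" using True by (intro mult_left_mono) auto
    moreover have "(1 - x + x^2) * (x * Bs) \<ge> 3/4 * (x*Bs)"
      using assms q by (intro mult_right_mono) auto
    moreover have "x*(1-x)*Bs + x^2*(x*Bs) = (1 - x + x^2) * (x * Bs)" by (simp add: algebra_simps power2_eq_square)
    ultimately show ?thesis using assms(7,1) lin1 by blast
  next
    case False
    have "(1-x)*(M-a) \<le> (1-x)*(x*Bs)"
      using False assms by (intro mult_left_mono) auto
    hence f1: "(1-x)*(M-a) \<le> x*(1-x)*Bs" by (simp add: ac_simps)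
    have f2: "3/4 * (M-a) \<le> (1 - x + x^2) * (M-a)"
      using assms q by (intro mult_right_mono) auto
    have f3: "(1-x)*(M-a) + x^2*(M-a) = (1 - x + x^2) * (M - a)" by (simp add: algebra_simps)
    have f4: "v \<le> a + (M - a)" using assms by simp
    show ?thesis by (rule lin2[OF f1 f2 f3 f4 assms(1)])
  qed
qed

lemma lin3: "(X::real) - 3 * m = K \<Longrightarrow> 0 \<le> K \<Longrightarrow> v \<le> m \<Longrightarrow> 3 * v \<le> X" by linarith

lemma arith_large:
  fixes a M E y v :: real
  assumes "0 \<le> a" "0 \<le> E" "E \<le> M - a" "0 \<le> y" "y \<le> 1/2" "v \<le> M - y * E"
  shows "3 * v \<le> 4 * (M*(1-y^2) - y*(1-y)*E + y^2 * a)"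
proof -
  have key: "0 \<le> M - 4*y^2*(M-a) - y*(1-4*y)*E"
  proof (cases "y \<le> 1/4")
    case True
    have "y*(1 - 4*y) * E \<le> y*(1 - 4*y) * (M-a)"
      using True assms by (intro mult_left_mono) auto
    moreover have "y*(M-a) \<le> M"
    proof -
      have "y*(M-a) \<le> 1*(M-a)" using assms by (intro mult_right_mono) auto
      hence "y*(M-a) \<le> M-a" by simp
      thus ?thesis using assms by linarith
    qed
    moreover have "M - 4*y^2*(M-a) - y*(1 - 4*y) * (M-a) = M - y*(M-a)"
      by (simp add: algebra_simps power2_eq_square)
    ultimately show ?thesis by (simp add: algebra_simps)
  next
    case False
    have "0 \<le> y * (4*y - 1) * E" using False assms by auto
    moreover have "4*y^2 \<le> 1"
    proof -
      have "y*y \<le> (1/2)*(1/2)" using assms by (intro mult_mono) auto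
      thus ?thesis by (simp add: power2_eq_square)
    qed
    hence "4*y^2 * (M - a) \<le> 1 * (M - a)" using assms by (intro mult_right_mono) auto
    ultimately show ?thesis using assms by (simp add: algebra_simps)
  qed
  have "4 * (M*(1-y^2) - y*(1-y)*E + y^2 * a) - 3 * (M - y*E) = M - 4*y^2*(M-a) - y*(1-4*y)*E"
    by (simp add: algebra_simps power2_eq_square)
  thus ?thesis using key assms by (smt (verit))
qed




lemma subD: "submodular_setfun n f \<Longrightarrow> S \<subseteq> {1..n} \<Longrightarrow> T \<subseteq> {1..n} \<Longrightarrow> f S + f T \<ge> f (S \<inter> T) + f (S \<union> T)"
  unfolding submodular_setfun_def by blast

lemma sub_up:
  assumes sub: "submodular_setfun n f" and S: "S \<subseteq> {1..n}"
  shows "f S \<le> f {} + (\<Sum>i\<in>S. (f {i} - f {}))"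
proof -
  have "finite S" using S finite_subset by blast
  thus ?thesis using S
  proof (induction S rule: finite_induct)
    case empty thus ?case by simp
  next
    case (insert i S)
    have "f S + f {i} \<ge> f (S \<inter> {i}) + f (S \<union> {i})"
      using insert.prems by (intro subD[OF sub]) auto
    moreover have "S \<inter> {i} = {}" "S \<union> {i} = insert i S" using insert.hyps by auto
    ultimately have a1: "f (insert i S) \<le> f S + f {i} - f {}" by simp
    have a2: "(\<Sum>j\<in>insert i S. (f {j} - f {})) = (f {i} - f {}) + (\<Sum>j\<in>S. (f {j} - f {}))"
      using insert.hyps by (rule sum.insert)
    have a3: "f S \<le> f {} + (\<Sum>j\<in>S. (f {j} - f {}))" using insert.IH insert.prems by blast
    show ?case using a1 a2 a3 by linarith
  qed
qed

lemma sub_down: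
  assumes sub: "submodular_setfun n f" and T: "T \<subseteq> {1..n}"
  shows "f ({1..n} - T) \<le> f {1..n} - (\<Sum>i\<in>T. (f {1..n} - f ({1..n} - {i})))"
proof -
  have "finite T" using T finite_subset by blast
  thus ?thesis using T
  proof (induction T rule: finite_induct)
    case empty thus ?case by simp
  next
    case (insert i T)
    let ?N = "{1..n::nat}"
    have "f (?N - T) + f (?N - {i}) \<ge> f ((?N - T) \<inter> (?N - {i})) + f ((?N - T) \<union> (?N - {i}))"
      by (intro subD[OF sub]) auto
    moreover have "(?N - T) \<inter> (?N - {i}) = ?N - insert i T" by auto
    moreover have "(?N - T) \<union> (?N - {i}) = ?N" using insert.hyps insert.prems by auto
    ultimately have a1: "f (?N - insert i T) \<le> f (?N - T) - (f ?N - f (?N - {i}))" by simp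
    have a2: "(\<Sum>j\<in>insert i T. (f ?N - f (?N - {j}))) = (f ?N - f (?N - {i})) + (\<Sum>j\<in>T. (f ?N - f (?N - {j})))"
      using insert.hyps by (rule sum.insert)
    have a3: "f (?N - T) \<le> f ?N - (\<Sum>j\<in>T. (f ?N - f (?N - {j})))" using insert.IH insert.prems by blast
    show ?case using a1 a2 a3 by linarith
  qed
qed

lemma th1_pid:
  assumes n: "2 \<le> n" and pos: "0 \<le> A" "0 \<le> B" "0 \<le> C"
    and s: "A + real n * B + C = 1" and m: "B + C = x" and p: "C = x * x"
  shows "pairwise_indep_dist n (\<lambda>_. x) (th1 {1..n} A B C)"
proof -
  let ?N = "{1..n::nat}"
  have fin: "finite ?N" and cN: "2 \<le> card ?N" using n by auto
  have hs: "(\<Sum>S\<in>Pow ?N. th1 ?N A B C S) = 1"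
    using th1_sum[OF fin cN, of A B C "\<lambda>_. 1"] s by (simp add: mult.commute)
  moreover have h1: "(\<Sum>S\<in>{S\<in>Pow ?N. i \<in> S}. th1 ?N A B C S) = x" if i: "i \<in> ?N" for i
  proof -
    have "(\<Sum>S\<in>{S\<in>Pow ?N. i \<in> S}. th1 ?N A B C S) = (\<Sum>S\<in>Pow ?N. th1 ?N A B C S * (if i \<in> S then 1 else 0))"
      by (rule sum_filter_ind) simp
    also have "\<dots> = B + C"
      using th1_sum[OF fin cN, of A B C "\<lambda>S. if i \<in> S then 1 else 0"] i by simp
    finally show ?thesis using m by simp
  qed
  moreover have h2: "(\<Sum>S\<in>{S\<in>Pow ?N. i \<in> S \<and> j \<in> S}. th1 ?N A B C S) = x * x"
    if i: "i \<in> ?N" "j \<in> ?N" "i < j" for i j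
  proof -
    have z: "(\<Sum>k\<in>?N. (if i \<in> {k} \<and> j \<in> {k} then 1 else 0::real)) = 0" using i by (intro sum.neutral) auto
    have "(\<Sum>S\<in>{S\<in>Pow ?N. i \<in> S \<and> j \<in> S}. th1 ?N A B C S) = (\<Sum>S\<in>Pow ?N. th1 ?N A B C S * (if i \<in> S \<and> j \<in> S then 1 else 0))"
      by (rule sum_filter_ind) simp
    also have "\<dots> = C"
      using th1_sum[OF fin cN, of A B C "\<lambda>S. if i \<in> S \<and> j \<in> S then 1 else 0"] i z by simp
    finally show ?thesis using p by simp
  qed
  moreover have h0: "\<forall>S\<in>Pow ?N. 0 \<le> th1 ?N A B C S" using pos by (simp add: th1_def)
  show ?thesis unfolding pairwise_indep_dist_def marginal_dist_def
    apply (intro conjI ballI impI)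
       apply (use h0 in blast)
      apply (fact hs)
     apply (erule h1)
    apply (erule (2) h2)
    done
qed

lemma cnt1:
  assumes "finite N" "i \<in> N"
  shows "(\<Sum>j\<in>N. if i \<in> N - {j} then 1 else 0) = real (card N) - 1"
proof -
  have "(\<Sum>j\<in>N. if i \<in> N - {j} then 1 else 0) = (\<Sum>j\<in>N. (1::real) - (if j = i then 1 else 0))"
    using assms by (intro sum.cong) auto
  also have "\<dots> = real (card N) - 1" using assms by (simp add: sum_subtractf)
  finally show ?thesis .
qed

lemma cnt2:
  assumes "finite N" "i \<in> N" "k \<in> N" "i \<noteq> k"
  shows "(\<Sum>j\<in>N. if i \<in> N - {j} \<and> k \<in> N - {j} then 1 else 0) = real (card N) - 2"
proof -
  have "(\<Sum>j\<in>N. if i \<in> N - {j} \<and> k \<in> N - {j} then 1 else 0) = (\<Sum>j\<in>N. (1::real) - (if j = i then 1 else 0) - (if j = k then 1 else 0))"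
    using assms by (intro sum.cong) auto
  also have "\<dots> = real (card N) - 2" using assms by (simp add: sum_subtractf)
  finally show ?thesis .
qed

lemma th2_pid:
  assumes n: "2 \<le> n" and pos: "0 \<le> A" "0 \<le> B" "0 \<le> C"
    and s: "A + real n * B + C = 1" and m: "A + (real n - 1) * B = x" and p: "A + (real n - 2) * B = x * x"
  shows "pairwise_indep_dist n (\<lambda>_. x) (\<lambda>S. th1 {1..n} A B C ({1..n} - S))"
proof -
  let ?N = "{1..n::nat}"
  have fin: "finite ?N" and cN: "2 \<le> card ?N" using n by auto
  have hs: "(\<Sum>S\<in>Pow ?N. th1 ?N A B C (?N - S)) = 1"
    using th2_sum[OF fin cN, of A B C "\<lambda>_. 1"] s by (simp add: mult.commute)
  moreover have h1: "(\<Sum>S\<in>{S\<in>Pow ?N. i \<in> S}. th1 ?N A B C (?N - S)) = x" if i: "i \<in> ?N" for i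
  proof -
    have "(\<Sum>S\<in>{S\<in>Pow ?N. i \<in> S}. th1 ?N A B C (?N - S)) = (\<Sum>S\<in>Pow ?N. th1 ?N A B C (?N - S) * (if i \<in> S then 1 else 0))"
      by (rule sum_filter_ind) simp
    also have "\<dots> = A + B * (real n - 1)"
      using th2_sum[OF fin cN, of A B C "\<lambda>S. if i \<in> S then 1 else 0"] i cnt1[OF fin i] by simp
    finally show ?thesis using m by (simp add: mult.commute)
  qed
  moreover have h2: "(\<Sum>S\<in>{S\<in>Pow ?N. i \<in> S \<and> j \<in> S}. th1 ?N A B C (?N - S)) = x * x"
    if i: "i \<in> ?N" "j \<in> ?N" "i < j" for i j
  proof -
    have "(\<Sum>S\<in>{S\<in>Pow ?N. i \<in> S \<and> j \<in> S}. th1 ?N A B C (?N - S)) = (\<Sum>S\<in>Pow ?N. th1 ?N A B C (?N - S) * (if i \<in> S \<and> j \<in> S then 1 else 0))"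
      by (rule sum_filter_ind) simp
    also have "\<dots> = A + B * (real n - 2)"
      using th2_sum[OF fin cN, of A B C "\<lambda>S. if i \<in> S \<and> j \<in> S then 1 else 0"] i cnt2[OF fin i(1,2)] by simp
    finally show ?thesis using p by (simp add: mult.commute)
  qed
  moreover have h0: "\<forall>S\<in>Pow ?N. 0 \<le> th1 ?N A B C (?N - S)" using pos by (simp add: th1_def)
  show ?thesis unfolding pairwise_indep_dist_def marginal_dist_def
    apply (intro conjI ballI impI)
       apply (use h0 in blast)
      apply (fact hs)
     apply (erule h1)
    apply (erule (2) h2)
    done
qed




lemma val_affine:
  assumes "marginal_dist n (\<lambda>_. x) \<theta>"
  shows "(\<Sum>S\<in>Pow {1..n}. \<theta> S * (K + (\<Sum>i\<in>S. c i))) = K + x * (\<Sum>i\<in>{1..n}. c i)"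
proof -
  have "(\<Sum>S\<in>Pow {1..n}. \<theta> S * (K + (\<Sum>i\<in>S. c i))) = K * (\<Sum>S\<in>Pow {1..n}. \<theta> S) + (\<Sum>S\<in>Pow {1..n}. \<theta> S * (\<Sum>i\<in>S. c i))"
    by (simp add: distrib_left sum.distrib sum_distrib_left mult.commute)
  also have "\<dots> = K + x * (\<Sum>i\<in>{1..n}. c i)"
    using assms swap_marg[OF assms] unfolding marginal_dist_def by simp
  finally show ?thesis .
qed

lemma val_mono:
  assumes "marginal_dist n (\<lambda>_. x) \<theta>" "\<And>S. S \<subseteq> {1..n} \<Longrightarrow> f S \<le> g S"
  shows "(\<Sum>S\<in>Pow {1..n}. \<theta> S * f S) \<le> (\<Sum>S\<in>Pow {1..n}. \<theta> S * g S)"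
  using assms unfolding marginal_dist_def by (intro sum_mono mult_left_mono) auto

lemma val_le_M:
  assumes "marginal_dist n (\<lambda>_. x) \<theta>" "monotone_setfun n f"
  shows "(\<Sum>S\<in>Pow {1..n}. \<theta> S * f S) \<le> f {1..n}"
proof -
  have "(\<Sum>S\<in>Pow {1..n}. \<theta> S * f S) \<le> (\<Sum>S\<in>Pow {1..n}. \<theta> S * (f {1..n} + (\<Sum>i\<in>S. 0)))"
    using assms(2) unfolding monotone_setfun_def by (intro val_mono[OF assms(1)]) auto
  thus ?thesis using val_affine[OF assms(1), of "f {1..n}" "\<lambda>_. 0"] by simp
qed

lemma val_ge0:
  assumes "marginal_dist n (\<lambda>_. x) \<theta>" "nonneg_setfun n f"
  shows "0 \<le> (\<Sum>S\<in>Pow {1..n}. \<theta> S * f S)"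
  using assms unfolding marginal_dist_def nonneg_setfun_def by (intro sum_nonneg mult_nonneg_nonneg) auto




lemma final_step:
  fixes C L P :: real
  assumes "0 \<le> C" "0 \<le> L" "L \<le> P" "3 * C \<le> 4 * L"
  shows "(if P = 0 then C = 0 else C / P \<le> 4 / 3)"
proof (cases "P = 0")
  case True thus ?thesis using assms by auto
next
  case False
  hence "P > 0" using assms by auto
  thus ?thesis using False assms by (simp add: divide_simps)
qed

theorem mainTheorem13:
  fixes n :: nat and f :: "nat set \<Rightarrow> real" and x :: real
  assumes "n \<ge> 2"
    and "nonneg_setfun n f" and "monotone_setfun n f" and "submodular_setfun n f"
    and "0 \<le> x" and "x \<le> 1"
    and "x \<le> 1 / (real n - 1) \<or> x \<ge> (real n - 2) / (real n - 1)"
  shows "(if upper_pi_ext n f (\<lambda>_. x) = 0 then concave_closure n f (\<lambda>_. x) = 0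
          else concave_closure n f (\<lambda>_. x) / upper_pi_ext n f (\<lambda>_. x) \<le> 4 / 3)"
proof -
  let ?N = "{1..n::nat}"
  let ?v = "\<lambda>\<theta>. (\<Sum>S\<in>Pow ?N. \<theta> S * f S)"
  have n: "2 \<le> n" using assms(1) .
  have fin: "finite ?N" and cN: "2 \<le> card ?N" using n by auto
  have nn: "\<And>S. S \<subseteq> ?N \<Longrightarrow> 0 \<le> f S" using assms(2) unfolding nonneg_setfun_def by blast
  have mono: "\<And>S T. S \<subseteq> T \<Longrightarrow> T \<subseteq> ?N \<Longrightarrow> f S \<le> f T" using assms(3) unfolding monotone_setfun_def by blast
  have n1: "real n - 1 > 0" using n by simp
  obtain \<theta>0 where pid: "pairwise_indep_dist n (\<lambda>_. x) \<theta>0"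
    and key: "\<And>\<theta>. marginal_dist n (\<lambda>_. x) \<theta> \<Longrightarrow> 3 * ?v \<theta> \<le> 4 * ?v \<theta>0"
  proof (cases "x \<le> 1 / (real n - 1)")
    case True
    have xn: "(real n - 1) * x \<le> 1" using True n1 by (simp add: field_simps)
    define A where "A = (1 - x) * (1 - (real n - 1) * x)"
    define B where "B = x * (1 - x)"
    define C where "C = x^2"
    have pos: "0 \<le> A" "0 \<le> B" "0 \<le> C" using xn assms(5,6) by (auto simp: A_def B_def C_def)
    have s: "A + real n * B + C = 1" by (simp add: A_def B_def C_def algebra_simps power2_eq_square)
    have m: "B + C = x" by (simp add: B_def C_def algebra_simps power2_eq_square)
    have p: "C = x * x" by (simp add: C_def power2_eq_square)
    have pid1: "pairwise_indep_dist n (\<lambda>_. x) (th1 ?N A B C)" by (rule th1_pid[OF n pos s m p])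
    let ?a = "f {}" and ?M = "f ?N"
    let ?Bs = "\<Sum>i\<in>?N. (f {i} - f {})"
    have sing: "(\<Sum>i\<in>?N. f {i}) = real n * ?a + ?Bs" by (simp add: sum_subtractf)
    have val1: "?v (th1 ?N A B C) = ?a + x*(1-x)*?Bs + x^2*(?M - ?a)"
    proof -
      have "?v (th1 ?N A B C) = A * ?a + B * (real n * ?a + ?Bs) + C * ?M"
        using th1_sum[OF fin cN, of A B C f] sing by simp
      also have "\<dots> = (A + real n * B + C) * ?a + B * ?Bs + C * (?M - ?a)" by (simp add: algebra_simps)
      also have "\<dots> = ?a + x*(1-x)*?Bs + x^2*(?M - ?a)" using s by (simp add: B_def C_def)
      finally show ?thesis .
    qed
    have a0: "0 \<le> ?a" using nn by simp
    have aM: "?a \<le> ?M" using mono by simp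
    have Bs0: "0 \<le> ?Bs" using mono by (intro sum_nonneg) auto
    show ?thesis
    proof (rule that[OF pid1])
      fix \<theta> assume mg: "marginal_dist n (\<lambda>_. x) \<theta>"
      have u1: "?v \<theta> \<le> ?M" by (rule val_le_M[OF mg assms(3)])
      have "?v \<theta> \<le> (\<Sum>S\<in>Pow ?N. \<theta> S * (?a + (\<Sum>i\<in>S. (f {i} - f {}))))"
        by (rule val_mono[OF mg]) (rule sub_up[OF assms(4)])
      also have "\<dots> = ?a + x * ?Bs" by (rule val_affine[OF mg])
      finally have u2: "?v \<theta> \<le> ?a + x * ?Bs" .
      show "3 * ?v \<theta> \<le> 4 * ?v (th1 ?N A B C)"
        unfolding val1 by (rule arith_small[OF a0 aM Bs0 assms(5,6) u1 u2])
    qed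
  next
    case False
    define y where "y = 1 - x"
    have x2: "x \<ge> (real n - 2) / (real n - 1)" using False assms(7) by blast
    have yn: "(real n - 1) * y \<le> 1"
    proof -
      have "real n - 2 \<le> x * (real n - 1)" using x2 n1 by (simp add: field_simps)
      thus ?thesis by (simp add: y_def algebra_simps)
    qed
    have "1 < x * (real n - 1)" using False n1 by (simp add: field_simps)
    hence "(real n - 1) * y < (real n - 1) * x" using yn by (simp add: mult.commute)
    hence "y < x" using n1 by simp
    hence yh: "y \<le> 1/2" by (simp add: y_def)
    have y0: "0 \<le> y" "y \<le> 1" using assms(5,6) by (auto simp: y_def)
    define A where "A = (1 - y) * (1 - (real n - 1) * y)"
    define B where "B = y * (1 - y)"
    define C where "C = y^2"
    have pos: "0 \<le> A" "0 \<le> B" "0 \<le> C" using yn y0 by (auto simp: A_def B_def C_def)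
    have s: "A + real n * B + C = 1" by (simp add: A_def B_def C_def algebra_simps power2_eq_square)
    have m: "A + (real n - 1) * B = x" by (simp add: A_def B_def y_def algebra_simps power2_eq_square)
    have p: "A + (real n - 2) * B = x * x" by (simp add: A_def B_def y_def algebra_simps power2_eq_square)
    have pid2: "pairwise_indep_dist n (\<lambda>_. x) (\<lambda>S. th1 ?N A B C (?N - S))" by (rule th2_pid[OF n pos s m p])
    let ?a = "f {}" and ?M = "f ?N"
    let ?E = "\<Sum>i\<in>?N. (?M - f (?N - {i}))"
    have cs: "(\<Sum>i\<in>?N. f (?N - {i})) = real n * ?M - ?E" by (simp add: sum_subtractf)
    have val2: "?v (\<lambda>S. th1 ?N A B C (?N - S)) = ?M*(1-y^2) - y*(1-y)*?E + y^2 * ?a"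
    proof -
      have "?v (\<lambda>S. th1 ?N A B C (?N - S)) = A * ?M + B * (real n * ?M - ?E) + C * ?a"
        using th2_sum[OF fin cN, of A B C f] cs by simp
      also have "\<dots> = (A + real n * B + C) * ?M - C * ?M - B * ?E + C * ?a" by (simp add: algebra_simps)
      also have "\<dots> = ?M*(1-y^2) - y*(1-y)*?E + y^2 * ?a" using s by (simp add: B_def C_def algebra_simps)
      finally show ?thesis .
    qed
    have a0: "0 \<le> ?a" using nn by simp
    have E0: "0 \<le> ?E" using mono by (intro sum_nonneg) auto
    have EM: "?E \<le> ?M - ?a" using sub_down[OF assms(4), of ?N] by simp
    show ?thesis
    proof (rule that[OF pid2])
      fix \<theta> assume mg: "marginal_dist n (\<lambda>_. x) \<theta>"
      have "?v \<theta> \<le> (\<Sum>S\<in>Pow ?N. \<theta> S * ((?M - ?E) + (\<Sum>i\<in>S. (?M - f (?N - {i})))))"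
      proof (rule val_mono[OF mg])
        fix S assume S: "S \<subseteq> ?N"
        have "f (?N - (?N - S)) \<le> ?M - (\<Sum>i\<in>?N - S. (?M - f (?N - {i})))"
          by (rule sub_down[OF assms(4)]) auto
        moreover have "?N - (?N - S) = S" using S by auto
        moreover have "(\<Sum>i\<in>?N - S. (?M - f (?N - {i}))) = ?E - (\<Sum>i\<in>S. (?M - f (?N - {i})))"
          using S by (simp add: sum_diff)
        ultimately show "f S \<le> (?M - ?E) + (\<Sum>i\<in>S. (?M - f (?N - {i})))" by simp
      qed
      also have "\<dots> = (?M - ?E) + x * ?E" by (rule val_affine[OF mg])
      also have "\<dots> = ?M - y * ?E" by (simp add: y_def algebra_simps)
      finally have u: "?v \<theta> \<le> ?M - y * ?E" .
      show "3 * ?v \<theta> \<le> 4 * ?v (\<lambda>S. th1 ?N A B C (?N - S))"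
        unfolding val2 by (rule arith_large[OF a0 E0 EM y0(1) yh u])
    qed
  qed
  have mg0: "marginal_dist n (\<lambda>_. x) \<theta>0" using pid unfolding pairwise_indep_dist_def by blast
  let ?SC = "{?v \<theta> | \<theta>. marginal_dist n (\<lambda>_. x) \<theta>}"
  let ?SP = "{?v \<theta> | \<theta>. pairwise_indep_dist n (\<lambda>_. x) \<theta>}"
  have CP: "concave_closure n f (\<lambda>_. x) = Sup ?SC" unfolding concave_closure_def by simp
  have PP: "upper_pi_ext n f (\<lambda>_. x) = Sup ?SP" unfolding upper_pi_ext_def by simp
  have bP: "bdd_above ?SP"
  proof (rule bdd_aboveI[of _ "f ?N"])
    fix w assume "w \<in> ?SP"
    then obtain \<theta> where t: "pairwise_indep_dist n (\<lambda>_. x) \<theta>" "w = ?v \<theta>" by blast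
    hence "marginal_dist n (\<lambda>_. x) \<theta>" unfolding pairwise_indep_dist_def by blast
    thus "w \<le> f ?N" using val_le_M[OF _ assms(3)] t(2) by blast
  qed
  have bC: "bdd_above ?SC"
  proof (rule bdd_aboveI[of _ "f ?N"])
    fix w assume "w \<in> ?SC"
    then obtain \<theta> where t: "marginal_dist n (\<lambda>_. x) \<theta>" "w = ?v \<theta>" by blast
    thus "w \<le> f ?N" using val_le_M[OF _ assms(3)] t(2) by blast
  qed
  have L0: "0 \<le> ?v \<theta>0" by (rule val_ge0[OF mg0 assms(2)])
  have LP: "?v \<theta>0 \<le> Sup ?SP" by (rule cSup_upper[OF _ bP]) (use pid in blast)
  have C0: "?v \<theta>0 \<le> Sup ?SC" by (rule cSup_upper[OF _ bC]) (use mg0 in blast)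
  have "Sup ?SC \<le> 4 * ?v \<theta>0 / 3"
  proof (rule cSup_least)
    show "?SC \<noteq> {}" using mg0 by blast
  next
    fix w assume "w \<in> ?SC"
    then obtain \<theta> where "marginal_dist n (\<lambda>_. x) \<theta>" "w = ?v \<theta>" by blast
    thus "w \<le> 4 * ?v \<theta>0 / 3" using key by fastforce
  qed
  hence c3: "3 * Sup ?SC \<le> 4 * ?v \<theta>0" by simp
  have c0: "0 \<le> Sup ?SC" using C0 L0 by linarith
  show ?thesis unfolding CP PP by (rule final_step[OF c0 L0 LP c3])
qed


end
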